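(* Let $\{a_n\}_{n\geq 0}$ be a sequence of non-negative real numbers and let $0<p<1$. If $\{a^p_n\}_{n\geq 0}$ converges to a finite limit $a\in\mathbb{R}$, then $a_n=O(\sqrt{n})$.
   Context: $a^p_n=\sum_{i=0}^n\binom{n}{i}p^i(1-p)^{n-i}a_i$. For $f,g:\mathbb{N}\to\mathbb{R}^+_0$, $f(n)=O(g(n))$ means there is $C>0$ with $f(n)\leq Cg(n)$ for all sufficiently large $n$. *)

theory Defs
  imports "HOL-Analysis.Analysis"
begin

definition binom_transform :: "real \<Rightarrow> (nat \<Rightarrow> real) \<Rightarrow> nat \<Rightarrow> real" where
  "binom_transform p a n = (\<Sum>i=0..n. real (n choose i) * p ^ i * (1 - p) ^ (n - i) * a i)"

end

theory Submission
  imports Defs "HOL-Probability.Hoeffding"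
begin

lemma card_window:
  fixes c t :: real assumes "t \<ge> 0"
  shows "real (card {x::nat. \<bar>real x - c\<bar> < t}) \<le> 2 * t + 1"
proof -
  define lo where "lo = nat \<lceil>c - t\<rceil>"
  define hi where "hi = nat \<lfloor>c + t\<rfloor>"
  have sub: "{x::nat. \<bar>real x - c\<bar> < t} \<subseteq> {lo..hi}"
  proof
    fix x assume "x \<in> {x::nat. \<bar>real x - c\<bar> < t}"
    hence h: "c - t < real x" "real x < c + t" by auto
    have "\<lceil>c - t\<rceil> \<le> int x" using h(1) by (simp add: ceiling_le_iff)
    hence "lo \<le> x" unfolding lo_def by (simp add: nat_le_iff)
    moreover have "int x \<le> \<lfloor>c + t\<rfloor>" using h(2) by (simp add: le_floor_iff)
    hence "x \<le> hi" unfolding hi_def by linarith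
    ultimately show "x \<in> {lo..hi}" by auto
  qed
  have "card {x::nat. \<bar>real x - c\<bar> < t} \<le> card {lo..hi}"
    by (rule card_mono[OF _ sub]) auto
  also have "card {lo..hi} = Suc hi - lo" by simp
  finally have cle: "real (card {x::nat. \<bar>real x - c\<bar> < t}) \<le> real (Suc hi - lo)" by linarith
  show ?thesis
  proof (cases "lo \<le> hi")
    case True
    have d: "real hi - real lo \<le> 2 * t"
    proof (cases "\<lfloor>c + t\<rfloor> \<ge> 0")
      case T: True
      have "real hi \<le> c + t" unfolding hi_def using T by (simp add: of_nat_nat)
      moreover have "real lo \<ge> c - t"
      proof (cases "\<lceil>c - t\<rceil> \<ge> 0")
        case True thus ?thesis unfolding lo_def by (simp add: of_nat_nat)
      next
        case False thus ?thesis unfolding lo_def by simp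
      qed
      ultimately show ?thesis by linarith
    next
      case False
      hence "hi = 0" unfolding hi_def by simp
      thus ?thesis using assms by simp
    qed
    moreover have "real (Suc hi - lo) = real hi + 1 - real lo" using True by auto
    ultimately show ?thesis using cle d by linarith
  next
    case False
    hence "Suc hi - lo = 0" by auto
    thus ?thesis using cle assms by auto
  qed
qed

lemma mode_bound:
  fixes m :: nat and p P :: real
  assumes m: "m > 0" and p: "0 < p" "p < 1"
    and P: "\<And>k. pmf (binomial_pmf m p) k \<le> P"
  shows "1 \<le> 2 * (2 * sqrt m + 1) * P"
proof -
  interpret binomial_distribution m p using p by unfold_locales auto
  define S where "S = {x::nat. \<bar>real x - m * p\<bar> < sqrt m}"
  have U: "measure_pmf.prob (binomial_pmf m p) {x. \<bar>real x - m * p\<bar> \<ge> sqrt m} \<le> 2 * exp (-2 * (sqrt m)\<^sup>2 / m)"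
    by (rule prob_abs_ge) (use m in auto)
  have "(sqrt m)\<^sup>2 = m" by simp
  hence "-2 * (sqrt m)\<^sup>2 / m = -2" using m by simp
  moreover have "exp (-2::real) \<le> 1/4"
  proof -
    have "1 + 2 + 2\<^sup>2/2 \<le> exp (2::real)" by (rule exp_lower_Taylor_quadratic) simp
    hence "4 \<le> exp (2::real)" by simp
    thus ?thesis by (simp add: exp_minus field_simps)
  qed
  ultimately have U2: "measure_pmf.prob (binomial_pmf m p) {x. \<bar>real x - m * p\<bar> \<ge> sqrt m} \<le> 1/2"
    using U by simp
  have "{x. \<bar>real x - m * p\<bar> \<ge> sqrt m} = UNIV - S" unfolding S_def by auto
  hence "measure_pmf.prob (binomial_pmf m p) S \<ge> 1/2"
    using U2 measure_pmf.prob_compl[of S "binomial_pmf m p"] by simp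
  have finS: "finite S"
  proof -
    have "S \<subseteq> {..nat \<lceil>m * p + sqrt m\<rceil>}"
    proof
      fix x assume "x \<in> S"
      hence "real x \<le> m * p + sqrt m" unfolding S_def by auto
      moreover have "m * p + sqrt m \<le> of_int \<lceil>m * p + sqrt m\<rceil>" by (rule le_of_int_ceiling)
      ultimately have "real x \<le> of_int \<lceil>m * p + sqrt m\<rceil>" by linarith
      hence "real_of_int (int x) \<le> of_int \<lceil>m * p + sqrt m\<rceil>" by simp
      hence "int x \<le> \<lceil>m * p + sqrt m\<rceil>" by (simp only: of_int_le_iff)
      thus "x \<in> {..nat \<lceil>m * p + sqrt m\<rceil>}" by auto
    qed
    thus ?thesis using finite_subset by blast
  qed
  have "measure_pmf.prob (binomial_pmf m p) S = sum (pmf (binomial_pmf m p)) S"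
    using finS by (rule measure_measure_pmf_finite)
  also have "\<dots> \<le> sum (\<lambda>_. P) S" by (intro sum_mono P)
  also have "\<dots> = real (card S) * P" by simp
  also have "\<dots> \<le> (2 * sqrt m + 1) * P"
    using card_window[of "sqrt m" "m*p"] P[of 0] unfolding S_def
    by (intro mult_right_mono) (auto intro: order.trans[OF pmf_nonneg])
  finally show ?thesis using \<open>measure_pmf.prob (binomial_pmf m p) S \<ge> 1/2\<close> by linarith
qed


lemma chain_up:
  fixes f :: "nat \<Rightarrow> real"
  assumes "\<And>j. k \<le> j \<Longrightarrow> j < n \<Longrightarrow> f j \<le> f (Suc j)" "k \<le> n"
  shows "f k \<le> f n"
  using assms
proof (induction n)
  case 0 thus ?case by simp
next
  case (Suc n)
  show ?case
  proof (cases "k = Suc n")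
    case False
    hence "f k \<le> f n" using Suc by auto
    also have "f n \<le> f (Suc n)" using Suc False by auto
    finally show ?thesis .
  qed simp
qed

lemma binom_ratio:
  fixes p :: real assumes p: "0 \<le> p" "p \<le> 1" and k: "k < m"
  shows "pmf (binomial_pmf m p) (Suc k) * (real k + 1) * (1 - p) = pmf (binomial_pmf m p) k * (real m - real k) * p"
proof -
  have pp: "p \<in> {0..1}" using p by auto
  have c: "real (m choose Suc k) * (real k + 1) = real (m choose k) * (real m - real k)"
  proof -
    have "Suc k * (m choose Suc k) = m * ((m - 1) choose k)" by (rule binomial_absorption)
    moreover have "(m - k) * (m choose k) = m * ((m - 1) choose k)" by (rule binomial_absorb_comp)
    ultimately have "Suc k * (m choose Suc k) = (m - k) * (m choose k)" by simp
    hence "real (Suc k * (m choose Suc k)) = real ((m - k) * (m choose k))" by simp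
    thus ?thesis using k by (simp add: of_nat_diff algebra_simps)
  qed
  have e: "m - k = Suc (m - Suc k)" using k by simp
  define X where "X = p ^ k * (1 - p) ^ (m - Suc k) * p * (1 - p)"
  have "pmf (binomial_pmf m p) (Suc k) * (real k + 1) * (1 - p)
      = (real (m choose Suc k) * (real k + 1)) * X"
    unfolding pmf_binomial[OF p] X_def by (simp only: power_Suc mult_ac)
  also have "\<dots> = (real (m choose k) * (real m - real k)) * X" by (simp only: c)
  also have "\<dots> = pmf (binomial_pmf m p) k * (real m - real k) * p"
    unfolding pmf_binomial[OF p] X_def e by (simp only: power_Suc mult_ac)
  finally show ?thesis .
qed

lemma chain_down:
  fixes f :: "nat \<Rightarrow> real"
  assumes "\<And>j. n \<le> j \<Longrightarrow> j < k \<Longrightarrow> f (Suc j) \<le> f j" "n \<le> k"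
  shows "f k \<le> f n"
  using assms
proof (induction k)
  case 0 thus ?case by simp
next
  case (Suc k)
  show ?case
  proof (cases "n = Suc k")
    case False
    hence "f (Suc k) \<le> f k" using Suc by auto
    also have "f k \<le> f n" using Suc False by auto
    finally show ?thesis .
  qed simp
qed

lemma binom_mode:
  fixes p :: real
  assumes p: "0 < p" "p < 1" and nm: "n \<le> m"
    and lo: "real n \<le> (real m + 1) * p" and hi: "(real m + 1) * p < real n + 1"
  shows "pmf (binomial_pmf m p) k \<le> pmf (binomial_pmf m p) n"
proof -
  define P where "P = pmf (binomial_pmf m p)"
  have p0: "0 \<le> p" "p \<le> 1" using p by auto
  have q: "(real j + 1) * (1 - p) > 0" for j using p by simp
  have ident: "(real m - real j) * p - (real j + 1) * (1 - p) = (real m + 1) * p - (real j + 1)" for j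
    by (simp add: algebra_simps)
  have up: "P j \<le> P (Suc j)" if "j < n" for j
  proof -
    have jm: "j < m" using that nm by simp
    have r: "P (Suc j) * ((real j + 1) * (1 - p)) = P j * ((real m - real j) * p)"
      using binom_ratio[OF p0 jm] unfolding P_def by (simp only: mult.assoc)
    have "(real j + 1) \<le> (real m + 1) * p" using that lo by linarith
    hence "(real j + 1) * (1 - p) \<le> (real m - real j) * p" using ident[of j] by linarith
    hence "P j * ((real j + 1) * (1 - p)) \<le> P j * ((real m - real j) * p)"
      by (intro mult_left_mono) (auto simp: P_def)
    hence "P j * ((real j + 1) * (1 - p)) \<le> P (Suc j) * ((real j + 1) * (1 - p))"
      using r by linarith
    thus ?thesis using mult_le_cancel_right_pos[OF q[of j]] by blast
  qed
  have down: "P (Suc j) \<le> P j" if "n \<le> j" "j < m" for j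
  proof -
    have r: "P (Suc j) * ((real j + 1) * (1 - p)) = P j * ((real m - real j) * p)"
      using binom_ratio[OF p0 that(2)] unfolding P_def by (simp only: mult.assoc)
    have "(real j + 1) > (real m + 1) * p" using that hi by linarith
    hence "(real j + 1) * (1 - p) \<ge> (real m - real j) * p" using ident[of j] by linarith
    hence "P j * ((real j + 1) * (1 - p)) \<ge> P j * ((real m - real j) * p)"
      by (intro mult_left_mono) (auto simp: P_def)
    hence "P j * ((real j + 1) * (1 - p)) \<ge> P (Suc j) * ((real j + 1) * (1 - p))"
      using r by linarith
    thus ?thesis using mult_le_cancel_right_pos[OF q[of j]] by blast
  qed
  show ?thesis
  proof (cases "k \<le> n")
    case True
    thus ?thesis using chain_up[of k n P] up unfolding P_def by blast
  next
    case False
    show ?thesis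
    proof (cases "k \<le> m")
      case True
      have "P k \<le> P n" by (rule chain_down[of n k P]) (use down True False in auto)
      thus ?thesis unfolding P_def .
    next
      case False
      have "pmf (binomial_pmf m p) k = 0"
        using False unfolding pmf_binomial[OF p0] by (simp add: binomial_eq_0)
      thus ?thesis by simp
    qed
  qed
qed

theorem lemma6:
  fixes a :: "nat \<Rightarrow> real" and p L :: real
  assumes nonneg: "\<And>n. a n \<ge> 0"
    and p: "0 < p" "p < 1"
    and lim: "binom_transform p a \<longlonglongrightarrow> L"
  shows "\<exists>C>0. \<forall>\<^sub>F n in sequentially. a n \<le> C * sqrt (real n)"
proof -
  have "Bseq (binom_transform p a)" using lim by (rule convergent_imp_Bseq[OF convergentI])
  then obtain B where B: "B > 0" "\<And>m. norm (binom_transform p a m) \<le> B" by (auto elim: BseqE)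
  have pp: "p \<in> {0..1}" using p by auto
  define C where "C = 2 * B * (2 / sqrt p + 1)"
  have Cpos: "C > 0" unfolding C_def using B p by (simp add: add_pos_pos)
  have "a n \<le> C * sqrt (real n)" if n1: "n \<ge> 1" for n
  proof -
    define M where "M = nat \<lceil>real n / p\<rceil>"
    have M1: "real M \<ge> real n / p" unfolding M_def by linarith
    have Mc: "real M = of_int \<lceil>real n / p\<rceil>" unfolding M_def using p by (simp add: of_nat_nat)
    have M2: "real M < real n / p + 1" using Mc ceiling_correct[of "real n / p"] by linarith
    have np: "real n / p > real n" using n1 p by (simp add: field_simps)
    have "M > n" using M1 np by linarith
    define m where "m = M - 1"
    have mM: "real m + 1 = real M" using \<open>M > n\<close> unfolding m_def by (simp add: of_nat_diff)
    have nm: "n \<le> m" using \<open>M > n\<close> unfolding m_def by simp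
    have m0: "m > 0" using nm n1 by simp
    have lo: "real n \<le> (real m + 1) * p" using M1 p mM by (simp add: field_simps)
    have hi: "(real m + 1) * p < real n + 1"
    proof -
      have "real M * p < (real n / p + 1) * p" using M2 p by simp
      also have "\<dots> = real n + p" using p by (simp add: field_simps)
      finally show ?thesis using mM p by simp
    qed
    define Pn where "Pn = pmf (binomial_pmf m p) n"
    have mode: "\<And>k. pmf (binomial_pmf m p) k \<le> Pn"
      unfolding Pn_def by (rule binom_mode[OF p nm lo hi])
    have one: "1 \<le> 2 * (2 * sqrt m + 1) * Pn" by (rule mode_bound[OF m0 p mode])
    have trm: "a n * Pn \<le> B"
    proof -
      have "a n * Pn = real (m choose n) * p ^ n * (1 - p) ^ (m - n) * a n"
        unfolding Pn_def pmf_binomial[of p, OF less_imp_le[OF p(1)] less_imp_le[OF p(2)]] by simp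
      also have "\<dots> \<le> binom_transform p a m"
        unfolding binom_transform_def
        by (rule member_le_sum[where f = "\<lambda>i. real (m choose i) * p ^ i * (1 - p) ^ (m - i) * a i"])
           (use nm p nonneg in auto)
      also have "\<dots> \<le> B" using B(2)[of m] by simp
      finally show ?thesis .
    qed
    have "a n \<le> a n * (2 * (2 * sqrt m + 1) * Pn)" using one nonneg[of n]
      by (metis mult.right_neutral mult_left_mono)
    also have "\<dots> = 2 * (2 * sqrt m + 1) * (a n * Pn)" by simp
    also have "\<dots> \<le> 2 * (2 * sqrt m + 1) * B" by (rule mult_left_mono[OF trm]) simp
    also have "\<dots> \<le> C * sqrt (real n)"
    proof -
      have "real m \<le> real n / p" using mM M2 by linarith
      hence "sqrt m \<le> sqrt (real n / p)" by simp
      also have "\<dots> = sqrt n / sqrt p" by (simp add: real_sqrt_divide)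
      finally have s: "sqrt m \<le> sqrt n / sqrt p" .
      have s1: "1 \<le> sqrt (real n)" using n1 by simp
      have "2 * sqrt m + 1 \<le> 2 * (sqrt n / sqrt p) + sqrt n" using s s1 by linarith
      also have "\<dots> = (2 / sqrt p + 1) * sqrt n" by (simp add: algebra_simps)
      finally have "2 * (2 * sqrt m + 1) * B \<le> 2 * ((2 / sqrt p + 1) * sqrt n) * B"
        using B by (intro mult_right_mono) auto
      thus ?thesis unfolding C_def by (simp add: algebra_simps)
    qed
    finally show ?thesis .
  qed
  hence "\<forall>\<^sub>F n in sequentially. a n \<le> C * sqrt (real n)"
    by (intro eventually_sequentiallyI[of 1]) auto
  thus ?thesis using Cpos by blast
qed

end
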